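(* Let $\{a_n\}_{n\ge 1}$ be a sequence of positive real numbers and let $\lambda>0$. Define \[ m_1=\liminf_{n\to\infty}\ln(\lambda n)\left(\tfrac12-\tfrac{a_{2n}}{a_n}\right),\quad m_2=\liminf_{n\to\infty}\ln(\lambda n)\left(\tfrac12-\tfrac{a_{2n+1}}{a_n}\right), \] \[ M_1=\limsup_{n\to\infty}\ln(\lambda n)\left(\tfrac12-\tfrac{a_{2n}}{a_n}\right),\quad M_2=\limsup_{n\to\infty}\ln(\lambda n)\left(\tfrac12-\tfrac{a_{2n+1}}{a_n}\right), \] and set $m=\min\{m_1,m_2\}$, $M=\max\{M_1,M_2\}$. Then: (i) if $m>\frac{\ln 2}{2}$, the series $\sum_{n=1}^\infty a_n$ converges; (ii) if $M<\frac{\ln 2}{2}$, the series $\sum_{n=1}^\infty a_n$ diverges.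
   Context: Here $\ln$ denotes the natural logarithm; liminf and limsup are taken in the extended reals. *)

theory Defs
  imports "HOL-Analysis.Analysis"
begin

end

theory Submission
  imports Defs
begin

lemma sum_double:
  fixes f :: "nat \<Rightarrow> real"
  shows "m \<le> M \<Longrightarrow> (\<Sum>n\<in>{2*m..<2*M}. f n) = (\<Sum>n\<in>{m..<M}. f (2*n) + f (2*n+1))"
proof (induction M rule: dec_induct)
  case base then show ?case by simp
next
  case (step M)
  have "{2*m..<2*Suc M} = insert (2*M+1) (insert (2*M) {2*m..<2*M})" using step.hyps by auto
  then show ?case using step by (simp add: atLeastLessThanSuc)
qed

definition blk :: "(nat \<Rightarrow> real) \<Rightarrow> nat \<Rightarrow> real" where
  "blk a k = (\<Sum>n\<in>{2^k..<2^Suc k}. a n)"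

lemma blk_rec: "blk a (Suc k) = (\<Sum>n\<in>{2^k..<2^Suc k}. a (2*n) + a (2*n+1))"
proof -
  have "blk a (Suc k) = (\<Sum>n\<in>{2*2^k..<2*2^Suc k}. a n)" unfolding blk_def by simp
  also have "\<dots> = (\<Sum>n\<in>{2^k..<2^Suc k}. a (2*n) + a (2*n+1))" by (rule sum_double) simp
  finally show ?thesis .
qed

lemma blk_partial: "(\<Sum>n\<in>{1..<2^N}. a n) = (\<Sum>k<N. blk a k)"
proof (induction N)
  case 0 then show ?case by simp
next
  case (Suc N)
  have "(\<Sum>n\<in>{1..<2^Suc N}. a n) = (\<Sum>n\<in>{1..<2^N}. a n) + (\<Sum>n\<in>{2^N..<2^Suc N}. a n)"
    by (rule sum.atLeastLessThan_concat[symmetric]) auto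
  then show ?case using Suc by (simp add: blk_def)
qed
lemma pt_upper: fixes x y c L M :: real assumes "0 < L" "L \<le> M" "0 < y" "0 < c" "c < L * (1/2 - x/y)" shows "x \<le> y * (1/2 - c/M)"
proof -
  have "c/L < 1/2 - x/y" using assms by (simp add: pos_divide_less_eq mult.commute)
  moreover have "c/M \<le> c/L" using assms by (intro divide_left_mono) auto
  ultimately have "x/y \<le> 1/2 - c/M" by linarith
  then show ?thesis using assms by (simp add: pos_divide_le_eq mult.commute)
qed
lemma pt_lower: fixes x y c L M :: real assumes "0 < M" "M \<le> L" "0 < y" "0 < c" "L*(1/2 - x/y) < c" shows "x \<ge> y*(1/2 - c/M)"
proof -
  have "1/2 - x/y < c/L" using assms by (simp add: pos_less_divide_eq mult.commute)
  moreover have "c/L \<le> c/M" using assms by (intro divide_left_mono) auto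
  ultimately have "1/2 - c/M \<le> x/y" by linarith
  then show ?thesis using assms by (simp add: pos_le_divide_eq mult.commute)
qed

lemma blk_nonneg: fixes a :: "nat \<Rightarrow> real" assumes pos: "\<And>n. n \<ge> 1 \<Longrightarrow> a n > 0" shows "blk a k \<ge> 0"
  unfolding blk_def by (rule sum_nonneg) (use pos in \<open>force intro: less_imp_le simp: Suc_le_eq\<close>)

lemma blk_pos: fixes a :: "nat \<Rightarrow> real" assumes pos: "\<And>n. n \<ge> 1 \<Longrightarrow> a n > 0" shows "blk a k > 0"
  unfolding blk_def
proof (rule sum_pos)
  show "{2^k..<2^Suc k::nat} \<noteq> {}" by simp
qed (use pos in \<open>auto simp: Suc_le_eq\<close>)

lemma conv_part:
  fixes a :: "nat \<Rightarrow> real" and l c :: real and N0 :: nat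
  assumes pos: "\<And>n. n \<ge> 1 \<Longrightarrow> a n > 0" and lam: "l > 0" and c: "c > ln 2 / 2"
    and ev: "\<And>n::nat. n \<ge> N0 \<Longrightarrow> c < ln (l * real n) * (1/2 - a (2*n) / a n) \<and> c < ln (l * real n) * (1/2 - a (2*n+1) / a n)"
  shows "summable (\<lambda>n. a (Suc n))"
proof -
  define T where "T = blk a"
  define Lg where "Lg k = ln (l * 2^k)" for k :: nat
  define K where "K = N0 + nat \<lceil>1/l\<rceil> + 1"
  have cpos: "c > 0" using c ln_gt_zero[of 2] by linarith
  have Tnn: "T k \<ge> 0" for k unfolding T_def using blk_nonneg pos by blast
  have LgS: "Lg (Suc k) = Lg k + ln 2" for k
    unfolding Lg_def using lam by (simp add: ln_mult mult.assoc[symmetric])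
  have Kge: "l * real K > 1"
  proof -
    have "real K \<ge> 1/l + 1" unfolding K_def by linarith
    then have "l * real K \<ge> l * (1/l + 1)" using lam by (simp add: mult_left_mono)
    also have "l * (1/l + 1) = 1 + l" using lam by (simp add: field_simps)
    finally show ?thesis using lam by linarith
  qed
  have big: "n \<ge> 2^k \<Longrightarrow> k \<ge> K \<Longrightarrow> n \<ge> N0 \<and> n \<ge> 1 \<and> l * real n > 1" for n k :: nat
  proof -
    assume h: "n \<ge> 2^k" "k \<ge> K"
    have "K < 2^K" by (rule less_exp)
    also have "(2::nat)^K \<le> 2^k" using h by (simp add: power_increasing)
    finally have "K < n" using h by linarith
    then have "l * real K \<le> l * real n" using lam by simp
    then show ?thesis using \<open>K < n\<close> Kge unfolding K_def by auto
  qed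
  have step: "T (Suc k) \<le> (1 - 2*c/Lg (Suc k)) * T k" if k: "k \<ge> K" for k
  proof -
    have "T (Suc k) = (\<Sum>n\<in>{2^k..<2^Suc k}. a (2*n) + a (2*n+1))" unfolding T_def by (rule blk_rec)
    also have "\<dots> \<le> (\<Sum>n\<in>{2^k..<2^Suc k}. a n * (1 - 2*c/Lg (Suc k)))"
    proof (rule sum_mono)
      fix n :: nat assume n: "n \<in> {2^k..<2^Suc k}"
      then have b: "n \<ge> N0" "n \<ge> 1" "l * real n > 1" using big[of k n] k by auto
      have L0: "0 < ln (l * real n)" using b by simp
      have "l * real n \<le> l * 2 ^ Suc k" using n lam
        by (simp del: power_Suc)
      then have LM: "ln (l * real n) \<le> Lg (Suc k)" unfolding Lg_def using b by simp
      have an: "a n > 0" using pos b by simp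
      have "a (2*n) \<le> a n * (1/2 - c/Lg (Suc k))"
        by (rule pt_upper[OF L0 LM an cpos]) (use ev b in blast)
      moreover have "a (2*n+1) \<le> a n * (1/2 - c/Lg (Suc k))"
        by (rule pt_upper[OF L0 LM an cpos]) (use ev b in blast)
      ultimately show "a (2*n) + a (2*n+1) \<le> a n * (1 - 2*c/Lg (Suc k))" by (simp add: algebra_simps)
    qed
    also have "\<dots> = (1 - 2*c/Lg (Suc k)) * T k" unfolding T_def blk_def
      by (simp add: sum_distrib_left mult.commute)
    finally show ?thesis .
  qed
  have Lgpos: "Lg k > 0" if "k \<ge> K" for k
    using big[of k "2^k"] that unfolding Lg_def by simp
  define d where "d = 2*c - ln 2"
  have dpos: "d > 0" unfolding d_def using c by simp
  have kum: "d * T (Suc k) \<le> Lg k * T k - Lg (Suc k) * T (Suc k)" if k: "k \<ge> K" for k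
  proof -
    define M where "M = Lg (Suc k)"
    have M0: "M > 0" unfolding M_def using Lgpos k by simp
    have Lk: "Lg k = M - ln 2" unfolding M_def LgS by simp
    have "(M + d) * T (Suc k) \<le> (M + d) * ((1 - 2*c/M) * T k)"
      using step[OF k] M0 dpos unfolding M_def by (intro mult_left_mono) auto
    also have "\<dots> = (M + d - 2*c - 2*c*d/M) * T k" using M0 by (simp add: field_simps)
    also have "\<dots> \<le> (M - ln 2) * T k"
    proof (rule mult_right_mono[OF _ Tnn])
      have "2*c*d/M \<ge> 0" using cpos dpos M0 by simp
      then show "M + d - 2*c - 2*c*d/M \<le> M - ln 2" unfolding d_def by simp
    qed
    finally show ?thesis unfolding Lk M_def by (simp add: algebra_simps)
  qed
  define z where "z j = Lg (j + K) * T (j + K)" for j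
  have zdec: "decseq z"
  proof (rule decseq_SucI)
    fix j
    have "d * T (Suc (j+K)) \<ge> 0" using dpos Tnn by simp
    then show "z (Suc j) \<le> z j" using kum[of "j+K"] unfolding z_def by simp
  qed
  have znn: "\<forall>i. 0 \<le> z i" unfolding z_def using Lgpos Tnn by (simp add: less_imp_le)
  obtain Z where "z \<longlonglongrightarrow> Z" using decseq_convergent[OF zdec znn] by blast
  then have sz: "summable (\<lambda>j. z j - z (Suc j))" by (rule telescope_summable')
  have "summable (\<lambda>j. T (Suc j + K))"
  proof (rule summable_comparison_test[OF _ summable_mult[OF sz, of "1/d"]])
    show "\<exists>N. \<forall>j\<ge>N. norm (T (Suc j + K)) \<le> 1/d * (z j - z (Suc j))"
    proof (intro exI allI impI)
      fix j :: nat
      have "d * T (Suc j + K) \<le> z j - z (Suc j)" using kum[of "j+K"] unfolding z_def by simp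
      then show "norm (T (Suc j + K)) \<le> 1/d * (z j - z (Suc j))" using dpos Tnn
        by (simp add: field_simps)
    qed
  qed
  then have sT: "summable T" using summable_iff_shift[of T "Suc K"] by simp
  show ?thesis
  proof (rule summableI_nonneg_bounded)
    show "0 \<le> a (Suc n)" for n using pos[of "Suc n"] by simp
    fix N
    have "(\<Sum>i<N. a (Suc i)) = (\<Sum>n\<in>{1..<Suc N}. a n)"
      by (simp only: One_nat_def sum.shift_bounds_Suc_ivl lessThan_atLeast0)
    also have "\<dots> \<le> (\<Sum>n\<in>{1..<2^Suc N}. a n)"
    proof (rule sum_mono2)
      have "Suc N < 2^Suc N" by (rule less_exp)
      then show "{1..<Suc N} \<subseteq> {1..<2^Suc N}" by auto
      show "\<And>b. b \<in> {1..<2 ^ Suc N} - {1..<Suc N} \<Longrightarrow> 0 \<le> a b" using pos by (auto intro: less_imp_le)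
    qed simp
    also have "\<dots> = (\<Sum>k<Suc N. T k)" unfolding T_def by (rule blk_partial)
    also have "\<dots> \<le> suminf T" using sT Tnn by (intro sum_le_suminf) auto
    finally show "(\<Sum>i<N. a (Suc i)) \<le> suminf T" .
  qed
qed

lemma div_part:
  fixes a :: "nat \<Rightarrow> real" and l c :: real and N0 :: nat
  assumes pos: "\<And>n. n \<ge> 1 \<Longrightarrow> a n > 0" and lam: "l > 0" and c: "c < ln 2 / 2" and cpos: "c > 0"
    and ev: "\<And>n::nat. n \<ge> N0 \<Longrightarrow> ln (l * real n) * (1/2 - a (2*n) / a n) < c \<and> ln (l * real n) * (1/2 - a (2*n+1) / a n) < c"
  shows "\<not> summable (\<lambda>n. a (Suc n))"
proof
  assume sa: "summable (\<lambda>n. a (Suc n))"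
  define T where "T = blk a"
  define Lg where "Lg k = ln (l * 2^k)" for k :: nat
  define K where "K = N0 + nat \<lceil>1/l\<rceil> + 1"
  have Tnn: "T k \<ge> 0" for k unfolding T_def using blk_nonneg pos by blast
  have Tpos: "T k > 0" for k unfolding T_def using blk_pos pos by blast
  have LgS: "Lg (Suc k) = Lg k + ln 2" for k
    unfolding Lg_def using lam by (simp add: ln_mult mult.assoc[symmetric])
  have Kge: "l * real K > 1"
  proof -
    have "real K \<ge> 1/l + 1" unfolding K_def by linarith
    then have "l * real K \<ge> l * (1/l + 1)" using lam by (simp add: mult_left_mono)
    also have "l * (1/l + 1) = 1 + l" using lam by (simp add: field_simps)
    finally show ?thesis using lam by linarith
  qed
  have big: "n \<ge> 2^k \<Longrightarrow> k \<ge> K \<Longrightarrow> n \<ge> N0 \<and> n \<ge> 1 \<and> l * real n > 1" for n k :: nat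
  proof -
    assume h: "n \<ge> 2^k" "k \<ge> K"
    have "K < 2^K" by (rule less_exp)
    also have "(2::nat)^K \<le> 2^k" using h by (simp add: power_increasing)
    finally have "K < n" using h by linarith
    then have "l * real K \<le> l * real n" using lam by simp
    then show ?thesis using \<open>K < n\<close> Kge unfolding K_def by auto
  qed
  have Lgpos: "Lg k > 0" if "k \<ge> K" for k
    using big[of k "2^k"] that unfolding Lg_def by simp
  have step: "T (Suc k) \<ge> (1 - 2*c/Lg k) * T k" if k: "k \<ge> K" for k
  proof -
    have "(1 - 2*c/Lg k) * T k = (\<Sum>n\<in>{2^k..<2^Suc k}. a n * (1 - 2*c/Lg k))" unfolding T_def blk_def
      by (simp add: sum_distrib_left mult.commute)
    also have "\<dots> \<le> (\<Sum>n\<in>{2^k..<2^Suc k}. a (2*n) + a (2*n+1))"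
    proof (rule sum_mono)
      fix n :: nat assume n: "n \<in> {2^k..<2^Suc k}"
      then have b: "n \<ge> N0" "n \<ge> 1" "l * real n > 1" using big[of k n] k by auto
      have "l * 2 ^ k \<le> l * real n" using n lam by simp
      then have LM: "Lg k \<le> ln (l * real n)" unfolding Lg_def by (rule ln_mono) (use lam in simp)
      have an: "a n > 0" using pos b by simp
      have "a (2*n) \<ge> a n * (1/2 - c/Lg k)"
        by (rule pt_lower[OF Lgpos[OF k] LM an cpos]) (use ev b in blast)
      moreover have "a (2*n+1) \<ge> a n * (1/2 - c/Lg k)"
        by (rule pt_lower[OF Lgpos[OF k] LM an cpos]) (use ev b in blast)
      moreover have "a n * (1 - 2*c/Lg k) = a n*(1/2 - c/Lg k) + a n*(1/2 - c/Lg k)" by (simp add: algebra_simps)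
      ultimately show "a n * (1 - 2*c/Lg k) \<le> a (2*n) + a (2*n+1)" by linarith
    qed
    also have "\<dots> = T (Suc k)" unfolding T_def by (rule blk_rec[symmetric])
    finally show ?thesis .
  qed
  have step2: "Lg k * T (Suc k) \<ge> (Lg k - ln 2) * T k" if k: "k \<ge> K" for k
  proof -
    have L0: "Lg k > 0" using Lgpos k by simp
    have "2*c/Lg k \<le> ln 2/Lg k" using c L0 by (intro divide_right_mono) auto
    then have "(1 - ln 2/Lg k) * T k \<le> (1 - 2*c/Lg k) * T k" using Tnn by (intro mult_right_mono) auto
    also have "\<dots> \<le> T (Suc k)" using step k by simp
    finally have "Lg k * ((1 - ln 2/Lg k) * T k) \<le> Lg k * T (Suc k)" using L0 by simp
    moreover have "Lg k * ((1 - ln 2/Lg k) * T k) = (Lg k - ln 2) * T k" using L0 by (simp add: field_simps)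
    ultimately show ?thesis by simp
  qed
  define y where "y k = Lg k * T (Suc k)" for k
  have ymono: "y k \<ge> y K" if "k \<ge> K" for k
    using that
  proof (induction k rule: dec_induct)
    case base then show ?case by simp
  next
    case (step k)
    have "y k \<le> y (Suc k)" using step2[of "Suc k"] step.hyps unfolding y_def LgS by simp
    then show ?case using step.IH by simp
  qed
  have yK: "y K > 0" unfolding y_def using Lgpos Tpos by simp
  have sT: "summable T"
  proof (rule summableI_nonneg_bounded)
    show "0 \<le> T n" for n by (rule Tnn)
    fix N
    have "(\<Sum>k<N. T k) = (\<Sum>n\<in>{1..<2^N}. a n)" unfolding T_def by (rule blk_partial[symmetric])
    also have "\<dots> \<le> (\<Sum>n\<in>{1..<Suc (2^N)}. a n)"
      by (rule sum_mono2) (use pos in \<open>auto intro: less_imp_le\<close>)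
    also have "\<dots> = (\<Sum>i<2^N. a (Suc i))"
      by (simp only: One_nat_def sum.shift_bounds_Suc_ivl lessThan_atLeast0)
    also have "\<dots> \<le> (\<Sum>i. a (Suc i))" using sa pos by (intro sum_le_suminf) (auto intro: less_imp_le)
    finally show "(\<Sum>k<N. T k) \<le> (\<Sum>i. a (Suc i))" .
  qed
  then have sT': "summable (\<lambda>j. T (Suc (j + K)))" using summable_iff_shift[of T "Suc K"] by simp
  define E where "E = nat \<lceil>Lg K / ln 2\<rceil> + 1"
  have ln2: "ln (2::real) > 0" by simp
  have LgE: "Lg K \<le> ln 2 * real E"
  proof -
    have "Lg K / ln 2 \<le> real E" unfolding E_def by linarith
    then show ?thesis using ln2 by (simp add: pos_divide_le_eq mult.commute)
  qed
  have Lgj: "Lg (j + K) = Lg K + real j * ln 2" for j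
    by (induction j) (simp_all add: LgS algebra_simps)
  have "summable (\<lambda>j. inverse (real (j + E)))"
  proof (rule summable_comparison_test[OF _ summable_mult[OF sT', of "ln 2 / y K"]])
    show "\<exists>N. \<forall>j\<ge>N. norm (inverse (real (j + E))) \<le> ln 2 / y K * T (Suc (j + K))"
    proof (intro exI allI impI)
      fix j :: nat
      have L0: "Lg (j + K) > 0" using Lgpos by simp
      have "y K \<le> Lg (j + K) * T (Suc (j + K))" using ymono[of "j+K"] unfolding y_def by simp
      also have "\<dots> \<le> (ln 2 * real (j + E)) * T (Suc (j + K))"
        using Lgj[of j] LgE Tnn by (intro mult_right_mono) (auto simp: algebra_simps)
      finally have h: "y K \<le> ln 2 * real (j + E) * T (Suc (j + K))" .
      have jE: "real (j + E) > 0" unfolding E_def by simp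
      show "norm (inverse (real (j + E))) \<le> ln 2 / y K * T (Suc (j + K))"
        using h jE yK by (simp add: field_simps)
    qed
  qed
  then show False using summable_iff_shift[of "\<lambda>n. inverse (real n)" E] not_summable_harmonic[where 'a=real] by simp
qed

theorem theorem2p1:
  fixes a :: "nat \<Rightarrow> real" and l :: real
    and m1 m2 M1 M2 m M :: ereal
  assumes pos: "\<And>n. n \<ge> 1 \<Longrightarrow> a n > 0"
    and lam: "l > 0"
    and m1_def: "m1 = liminf (\<lambda>n. ereal (ln (l * real n) * (1/2 - a (2*n) / a n)))"
    and m2_def: "m2 = liminf (\<lambda>n. ereal (ln (l * real n) * (1/2 - a (2*n+1) / a n)))"
    and M1_def: "M1 = limsup (\<lambda>n. ereal (ln (l * real n) * (1/2 - a (2*n) / a n)))"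
    and M2_def: "M2 = limsup (\<lambda>n. ereal (ln (l * real n) * (1/2 - a (2*n+1) / a n)))"
    and m_def: "m = min m1 m2"
    and M_def: "M = max M1 M2"
  shows "(m > ereal (ln 2 / 2) \<longrightarrow> summable (\<lambda>n. a (Suc n)))
       \<and> (M < ereal (ln 2 / 2) \<longrightarrow> \<not> summable (\<lambda>n. a (Suc n)))"
proof (intro conjI impI)
  assume hm: "m > ereal (ln 2 / 2)"
  obtain c where c1: "ereal (ln 2 / 2) < ereal c" and c2: "ereal c < m" using ereal_dense2[OF hm] by blast
  have "eventually (\<lambda>n. ereal (ln (l * real n) * (1/2 - a (2*n) / a n)) > ereal c) sequentially"
    using c2 unfolding m_def m1_def by (intro less_LiminfD) simp
  moreover have "eventually (\<lambda>n. ereal (ln (l * real n) * (1/2 - a (2*n+1) / a n)) > ereal c) sequentially"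
    using c2 unfolding m_def m2_def by (intro less_LiminfD) simp
  ultimately have "eventually (\<lambda>n. c < ln (l * real n) * (1/2 - a (2*n) / a n) \<and> c < ln (l * real n) * (1/2 - a (2*n+1) / a n)) sequentially"
    by eventually_elim simp
  then obtain N0 where N0: "\<And>n. n \<ge> N0 \<Longrightarrow> c < ln (l * real n) * (1/2 - a (2*n) / a n) \<and> c < ln (l * real n) * (1/2 - a (2*n+1) / a n)"
    unfolding eventually_sequentially by blast
  show "summable (\<lambda>n. a (Suc n))"
    by (rule conv_part[OF pos lam _ N0]) (use c1 in simp_all)
next
  assume hM: "M < ereal (ln 2 / 2)"
  have "max M 0 < ereal (ln 2 / 2)" using hM by simp
  then obtain c where c1: "max M 0 < ereal c" and c2: "ereal c < ereal (ln 2 / 2)" using ereal_dense2 by blast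
  have "eventually (\<lambda>n. ereal (ln (l * real n) * (1/2 - a (2*n) / a n)) < ereal c) sequentially"
    using c1 unfolding M_def M1_def by (intro Limsup_lessD) simp
  moreover have "eventually (\<lambda>n. ereal (ln (l * real n) * (1/2 - a (2*n+1) / a n)) < ereal c) sequentially"
    using c1 unfolding M_def M2_def by (intro Limsup_lessD) simp
  ultimately have "eventually (\<lambda>n. ln (l * real n) * (1/2 - a (2*n) / a n) < c \<and> ln (l * real n) * (1/2 - a (2*n+1) / a n) < c) sequentially"
    by eventually_elim simp
  then obtain N0 where N0: "\<And>n. n \<ge> N0 \<Longrightarrow> ln (l * real n) * (1/2 - a (2*n) / a n) < c \<and> ln (l * real n) * (1/2 - a (2*n+1) / a n) < c"
    unfolding eventually_sequentially by blast
  show "\<not> summable (\<lambda>n. a (Suc n))"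
    by (rule div_part[OF pos lam _ _ N0]) (use c1 c2 in simp_all)
qed

end
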